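(* Let $d\ge2$ and let $q^{\mathrm{pu}}$ be the $\varepsilon$-LDP $\texttt{PrivUnit}_2$ mechanism on $\mathbb{S}^{d-1}$ with parameters $p_0$ and $\gamma$ and estimator $\hat{\mathbf{x}}^{\mathrm{pu}}=\mathbf{z}/m_{\mathrm{pu}}$. Let $q^{\mathrm{mmrc}}$ denote the MMRC mechanism simulating $\texttt{PrivUnit}_2$ with $N$ candidates and estimator $\hat{\mathbf{x}}^{\mathrm{mmrc}}=\mathbf{z}_K/m_{\mathrm{mmrc}}$. Let $\lambda>0$. If \[ N\ge\frac{e^{2\varepsilon}}{2}\Big(\frac{2(1+\lambda)}{\lambda(p_0-1/2)}\Big)^2\ln\Big(\frac{4(1+\lambda)}{\lambda(p_0-1/2)}\Big), \] then for every $\mathbf{x}\in\mathbb{S}^{d-1}$, \[ \mathbb{E}_{q^{\mathrm{mmrc}}}\big[\|\hat{\mathbf{x}}^{\mathrm{mmrc}}-\mathbf{x}\|_2^2\big]\le(1+\lambda)^2E+2(1+\lambda)(2+\lambda)\sqrt{E}+(2+\lambda)^2,\qquad E=\mathbb{E}_{q^{\mathrm{pu}}}\big[\|\hat{\mathbf{x}}^{\mathrm{pu}}-\mathbf{x}\|_2^2\big]. \]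
   Context: $\texttt{PrivUnit}_2$ with parameters $\gamma\in[0,1]$, $p_0\ge1/2$ (chosen so the mechanism is $\varepsilon$-LDP, i.e. its output density ratio between any two inputs is at most $e^\varepsilon$): on input $\mathbf{x}\in\mathbb{S}^{d-1}$, output $\mathbf{z}$ uniform on $\mathsf{Cap}_{\mathbf{x}}=\{\mathbf{z}\in\mathbb{S}^{d-1}:\langle\mathbf{z},\mathbf{x}\rangle\ge\gamma\}$ with probability $p_0$ and uniform on its complement otherwise. Its density w.r.t. the uniform probability on the sphere is $c_1=p_0/\bar\theta$ on the cap and $c_2=(1-p_0)/(1-\bar\theta)$ off it, where $\bar\theta=\mathbb{P}_{\mathbf{z}\sim\mathrm{Unif}(\mathbb{S}^{d-1})}(\mathbf{z}\in\mathsf{Cap}_{\mathbf{x}})$. For $p\in[0,1]$ let $m(p)=\frac{(1-\gamma^2)^{\alpha}}{2^{d-2}(d-1)}\big[\frac{p}{B(\alpha,\alpha)-B(\tau;\alpha,\alpha)}-\frac{1-p}{B(\tau;\alpha,\alpha)}\big]$, $\alpha=\frac{d-1}2$, $\tau=\frac{1+\gamma}2$, $B(x;a,b)=\int_0^xt^{a-1}(1-t)^{b-1}dt$, $B(a,b)=B(1;a,b)$; $m_{\mathrm{pu}}=m(p_0)$. MMRC simulating $\texttt{PrivUnit}_2$: draw $\mathbf{z}_1,\dots,\mathbf{z}_N$ i.i.d. uniform on $\mathbb{S}^{d-1}$; $\theta=\frac1N\#\{k:\mathbf{z}_k\in\mathsf{Cap}_{\mathbf{x}}\}$; $\pi^{\mathrm{mrc}}(k)=\frac1N\frac{c_i}{\theta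 c_1+(1-\theta)c_2}$ ($i=1$ for cap candidates, $i=2$ otherwise); $t_u=\frac1N\frac{c_1}{\bar\theta c_1+(1-\bar\theta)c_2}$, $t_l=\frac1N\frac{c_2}{\bar\theta c_1+(1-\bar\theta)c_2}$; $\pi^{\mathrm{mmrc}}=\pi^{\mathrm{mrc}}$ if $\theta=\bar\theta$; if $\theta<\bar\theta$, $\pi^{\mathrm{mmrc}}(k)=t_u$ on cap candidates and $\frac{1-N\theta t_u}{N(1-\theta)}$ otherwise; if $\theta>\bar\theta$, $\pi^{\mathrm{mmrc}}(k)=t_l$ on non-cap candidates and $\frac{1-N(1-\theta)t_l}{N\theta}$ otherwise. $K\sim\pi^{\mathrm{mmrc}}$, $p_{\mathrm{mmrc}}=\mathbb{P}(\mathbf{z}_K\in\mathsf{Cap}_{\mathbf{x}})$ and $m_{\mathrm{mmrc}}=m(p_{\mathrm{mmrc}})$. $\mathbb{E}_{q^{\mathrm{mmrc}}}$ is over the candidates and $K$. *)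

theory Defs
  imports "HOL-Probability.Probability"
begin

text \<open>Uniform probability measure on the unit sphere S^{d-1} of a Euclidean space:
  the push-forward of the uniform distribution on the unit ball under radial
  normalisation x \<mapsto> x / |x| (this is the normalised surface measure).\<close>
definition sphere_unif :: "('a::euclidean_space) measure" where
  "sphere_unif = distr (uniform_measure lborel (ball 0 1)) borel (\<lambda>v. (1 / norm v) *\<^sub>R v)"

definition cap :: "'a::euclidean_space \<Rightarrow> real \<Rightarrow> 'a set" where
  "cap x \<gamma> = {z \<in> sphere 0 1. z \<bullet> x \<ge> \<gamma>}"

definition theta_bar :: "'a::euclidean_space \<Rightarrow> real \<Rightarrow> real" where
  "theta_bar x \<gamma> = measure (sphere_unif :: 'a measure) (cap x \<gamma>)"

definition pu_c1 :: "'a::euclidean_space \<Rightarrow> real \<Rightarrow> real \<Rightarrow> real" where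
  "pu_c1 x \<gamma> p0 = p0 / theta_bar x \<gamma>"

definition pu_c2 :: "'a::euclidean_space \<Rightarrow> real \<Rightarrow> real \<Rightarrow> real" where
  "pu_c2 x \<gamma> p0 = (1 - p0) / (1 - theta_bar x \<gamma>)"

definition pu_density :: "'a::euclidean_space \<Rightarrow> real \<Rightarrow> real \<Rightarrow> 'a \<Rightarrow> real" where
  "pu_density x \<gamma> p0 z = (if z \<in> cap x \<gamma> then pu_c1 x \<gamma> p0 else pu_c2 x \<gamma> p0)"

definition inc_beta :: "real \<Rightarrow> real \<Rightarrow> real \<Rightarrow> real" where
  "inc_beta x a b = integral {0..x} (\<lambda>t. t powr (a - 1) * (1 - t) powr (b - 1))"

definition beta_fn :: "real \<Rightarrow> real \<Rightarrow> real" where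
  "beta_fn a b = inc_beta 1 a b"

definition m_fun :: "nat \<Rightarrow> real \<Rightarrow> real \<Rightarrow> real" where
  "m_fun d \<gamma> p =
     (let \<alpha> = (real d - 1) / 2; \<tau> = (1 + \<gamma>) / 2 in
      (1 - \<gamma>\<^sup>2) powr \<alpha> / (2 ^ (d - 2) * (real d - 1)) *
      (p / (beta_fn \<alpha> \<alpha> - inc_beta \<tau> \<alpha> \<alpha>) - (1 - p) / inc_beta \<tau> \<alpha> \<alpha>))"

definition E_pu :: "'a::euclidean_space \<Rightarrow> real \<Rightarrow> real \<Rightarrow> real" where
  "E_pu x \<gamma> p0 =
     (\<integral>z. pu_density x \<gamma> p0 z *
          (norm ((1 / m_fun DIM('a) \<gamma> p0) *\<^sub>R z - x))\<^sup>2 \<partial>(sphere_unif :: 'a measure))"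

definition mmrc_theta :: "nat \<Rightarrow> 'a::euclidean_space \<Rightarrow> real \<Rightarrow> (nat \<Rightarrow> 'a) \<Rightarrow> real" where
  "mmrc_theta N x \<gamma> zs = real (card {k. k < N \<and> zs k \<in> cap x \<gamma>}) / real N"

definition mmrc_pi :: "nat \<Rightarrow> 'a::euclidean_space \<Rightarrow> real \<Rightarrow> real \<Rightarrow> (nat \<Rightarrow> 'a) \<Rightarrow> nat \<Rightarrow> real" where
  "mmrc_pi N x \<gamma> p0 zs k =
     (let \<theta> = mmrc_theta N x \<gamma> zs; tb = theta_bar x \<gamma>;
          c1 = pu_c1 x \<gamma> p0; c2 = pu_c2 x \<gamma> p0;
          tu = (1 / real N) * (c1 / (tb * c1 + (1 - tb) * c2));
          tl = (1 / real N) * (c2 / (tb * c1 + (1 - tb) * c2));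
          incap = (zs k \<in> cap x \<gamma>) in
      if \<theta> = tb then
        (1 / real N) * ((if incap then c1 else c2) / (\<theta> * c1 + (1 - \<theta>) * c2))
      else if \<theta> < tb then
        (if incap then tu else (1 - real N * \<theta> * tu) / (real N * (1 - \<theta>)))
      else
        (if incap then (1 - real N * (1 - \<theta>) * tl) / (real N * \<theta>) else tl))"

definition candidates :: "nat \<Rightarrow> (nat \<Rightarrow> 'a::euclidean_space) measure" where
  "candidates N = PiM {..<N} (\<lambda>_. sphere_unif)"

definition p_mmrc :: "nat \<Rightarrow> 'a::euclidean_space \<Rightarrow> real \<Rightarrow> real \<Rightarrow> real" where
  "p_mmrc N x \<gamma> p0 =
     (\<integral>zs. (\<Sum>k<N. mmrc_pi N x \<gamma> p0 zs k * indicator (cap x \<gamma>) (zs k)) \<partial>candidates N)"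

definition E_mmrc :: "nat \<Rightarrow> 'a::euclidean_space \<Rightarrow> real \<Rightarrow> real \<Rightarrow> real" where
  "E_mmrc N x \<gamma> p0 =
     (\<integral>zs. (\<Sum>k<N. mmrc_pi N x \<gamma> p0 zs k *
          (norm ((1 / m_fun DIM('a) \<gamma> (p_mmrc N x \<gamma> p0)) *\<^sub>R zs k - x))\<^sup>2) \<partial>candidates N)"

end

theory Submission
  imports Defs
begin


definition nrmz :: "'a::euclidean_space \<Rightarrow> 'a" where "nrmz v = (1 / norm v) *\<^sub>R v"

lemma nrmz_meas[measurable]: "nrmz \<in> borel_measurable borel"
  unfolding nrmz_def by measurable

abbreviation UB :: "'a::euclidean_space measure" where "UB \<equiv> uniform_measure lborel (ball 0 1)"

lemma UB_prob: "prob_space (UB :: 'a::euclidean_space measure)"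
  apply (rule prob_space_uniform_measure)
  using emeasure_lborel_ball_finite[of "0::'a" 1] content_ball_pos[of 1 "0::'a"]
  by (auto simp: emeasure_eq_ennreal_measure)

lemma sets_UB[simp]: "sets (UB :: 'a::euclidean_space measure) = sets borel"
  by simp

lemma sphere_unif_eq: "sphere_unif = distr UB borel nrmz"
  unfolding sphere_unif_def nrmz_def ..

lemma sphere_prob: "prob_space (sphere_unif :: 'a::euclidean_space measure)"
  unfolding sphere_unif_eq
  apply (rule prob_space.prob_space_distr[OF UB_prob])
  by (simp add: measurable_cong_sets[OF sets_UB refl])

lemma sets_sphere[simp]: "sets (sphere_unif :: 'a::euclidean_space measure) = sets borel"
  unfolding sphere_unif_eq by simp

lemma space_sphere[simp]: "space (sphere_unif :: 'a::euclidean_space measure) = UNIV"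
  unfolding sphere_unif_eq by simp

lemma cap_borel[measurable]: "cap x \<gamma> \<in> sets borel"
proof -
  have "cap x \<gamma> = sphere 0 1 \<inter> {z. z \<bullet> x \<ge> \<gamma>}" unfolding cap_def by auto
  moreover have "closed {z. z \<bullet> x \<ge> \<gamma>}" using closed_halfspace_ge[of \<gamma> x] by (simp add: inner_commute)
  ultimately show ?thesis by auto
qed

lemma AE_sphere: "AE z in (sphere_unif :: 'a::euclidean_space measure). norm z = 1"
proof -
  have "AE v in (UB::'a measure). norm (nrmz v) = 1"
  proof (rule AE_uniform_measureI)
    show "ball 0 1 \<in> sets lborel" by simp
    have "AE v in (lborel::'a measure). v \<noteq> 0"
      by (rule AE_I'[where N="{0}"]) auto
    then show "AE v in (lborel::'a measure). v \<in> ball 0 1 \<longrightarrow> norm (nrmz v) = 1"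
      by eventually_elim (simp add: nrmz_def)
  qed
  then show ?thesis unfolding sphere_unif_eq
    by (subst AE_distr_iff) (auto simp: measurable_cong_sets[OF sets_UB refl])
qed



lemma UB_pos:
  fixes S :: "'a::euclidean_space set"
  assumes S: "S \<in> sets borel" and r: "r > 0" and sub: "ball c r \<subseteq> ball 0 1 \<inter> S"
  shows "measure UB S > 0"
proof -
  have fin: "emeasure lborel (ball (0::'a) 1) \<noteq> \<infinity>" using emeasure_lborel_ball_finite[of "0::'a" 1] by auto
  have pos1: "measure lborel (ball (0::'a) 1) > 0" using content_ball_pos[of 1 "0::'a"] by simp
  have "measure UB S = measure lborel (ball 0 1 \<inter> S) / measure lborel (ball (0::'a) 1)"
    apply (rule measure_uniform_measure)
    using fin pos1 S by (auto simp: emeasure_eq_ennreal_measure)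
  moreover have "measure lborel (ball c r) \<le> measure lborel (ball 0 1 \<inter> S)"
  proof (rule measure_mono_fmeasurable[OF sub])
    show "ball c r \<in> sets lborel" by simp
    have "emeasure lborel (ball 0 1 \<inter> S) \<le> emeasure lborel (ball (0::'a) 1)"
      by (rule emeasure_mono) auto
    then have "emeasure lborel (ball 0 1 \<inter> S) < \<infinity>"
      using emeasure_lborel_ball_finite[of "0::'a" 1] by auto
    then show "ball 0 1 \<inter> S \<in> fmeasurable lborel" using S by (auto simp: fmeasurable_def)
  qed
  moreover have "measure lborel (ball c r) > 0" using content_ball_pos[OF r] by simp
  ultimately show ?thesis using pos1 by (metis divide_pos_pos less_le_trans)
qed

lemma sphere_measure_pos:
  fixes S :: "'a::euclidean_space set"
  assumes S: "S \<in> sets borel" and r: "r > 0" and sub: "ball c r \<subseteq> ball 0 1 \<inter> nrmz -` S"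
  shows "measure sphere_unif S > 0"
proof -
  have "measure sphere_unif S = measure UB (nrmz -` S \<inter> space UB)"
    unfolding sphere_unif_eq
    by (rule measure_distr) (use S in \<open>auto simp: measurable_cong_sets[OF sets_UB refl]\<close>)
  also have "\<dots> > 0"
    apply simp apply (rule UB_pos[OF _ r]) using S sub by (auto intro: measurable_sets_borel[OF nrmz_meas])
  finally show ?thesis .
qed

lemma theta_bar_bounds:
  fixes x :: "'a::euclidean_space"
  assumes x: "norm x = 1" and g0: "0 \<le> \<gamma>" and g1: "\<gamma> < 1"
  shows "0 < theta_bar x \<gamma>" "theta_bar x \<gamma> < 1"
proof -
  define r where "r = (1 - \<gamma>) / 4"
  have r: "r > 0" "r < 1/2" using g0 g1 by (auto simp: r_def)
  have xx: "x \<bullet> x = 1" using x by (simp add: dot_square_norm)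
  have "ball (x /\<^sub>R 2) r \<subseteq> ball 0 1 \<inter> nrmz -` cap x \<gamma>"
  proof
    fix v assume v: "v \<in> ball (x /\<^sub>R 2) r"
    then have d: "norm (v - x /\<^sub>R 2) < r" by (simp add: dist_norm norm_minus_commute)
    have nv: "norm v < 1/2 + r" using norm_triangle_ineq[of "v - x /\<^sub>R 2" "x /\<^sub>R 2"] d x by simp
    have "\<bar>(v - x /\<^sub>R 2) \<bullet> x\<bar> \<le> norm (v - x /\<^sub>R 2) * norm x" by (rule Cauchy_Schwarz_ineq2)
    then have vx: "v \<bullet> x > 1/2 - r" using d x xx by (simp add: inner_diff_left abs_le_iff)
    have vpos: "norm v > 0" using vx r by (metis inner_zero_left linorder_not_le norm_eq_zero order_less_imp_le zero_less_norm_iff diff_gt_0_iff_gt less_trans field_sum_of_halves order.strict_trans1)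
    have "nrmz v \<bullet> x = (v \<bullet> x) / norm v" by (simp add: nrmz_def)
    moreover have "(v \<bullet> x) / norm v \<ge> \<gamma>"
    proof -
      have "\<gamma> * norm v \<le> \<gamma> * (1/2 + r)" using nv g0 by (intro mult_left_mono) auto
      also have "\<dots> \<le> 1/2 - r"
      proof -
        have "0 \<le> (1-\<gamma>)^2" by simp
        then show ?thesis by (simp add: r_def field_simps power2_eq_square)
      qed
      finally show ?thesis using vx vpos by (simp add: pos_le_divide_eq)
    qed
    moreover have "norm (nrmz v) = 1" using vpos by (simp add: nrmz_def)
    moreover have "norm v < 1" using nv r by simp
    ultimately show "v \<in> ball 0 1 \<inter> nrmz -` cap x \<gamma>" by (simp add: cap_def)
  qed
  then show "0 < theta_bar x \<gamma>" unfolding theta_bar_def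
    by (intro sphere_measure_pos[OF _ r(1)]) auto
  have "ball (- x /\<^sub>R 2) r \<subseteq> ball 0 1 \<inter> nrmz -` (UNIV - cap x \<gamma>)"
  proof
    fix v assume v: "v \<in> ball (- x /\<^sub>R 2) r"
    then have d: "norm (v + x /\<^sub>R 2) < r" by (simp add: dist_norm norm_minus_commute)
    have nv: "norm v < 1/2 + r" using norm_triangle_ineq[of "v + x /\<^sub>R 2" "- x /\<^sub>R 2"] d x by simp
    have "\<bar>(v + x /\<^sub>R 2) \<bullet> x\<bar> \<le> norm (v + x /\<^sub>R 2) * norm x" by (rule Cauchy_Schwarz_ineq2)
    then have vx: "v \<bullet> x < 0" using d x xx r by (simp add: inner_add_left abs_le_iff)
    have "nrmz v \<bullet> x = (v \<bullet> x) / norm v" by (simp add: nrmz_def)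
    moreover have "norm v > 0" using vx by (metis inner_zero_left less_irrefl zero_less_norm_iff)
    then have "(v \<bullet> x) / norm v < 0" using vx by (simp add: divide_neg_pos)
    moreover have "norm v < 1" using nv r by simp
    ultimately show "v \<in> ball 0 1 \<inter> nrmz -` (UNIV - cap x \<gamma>)" using g0 g1 vx
      by (auto simp: cap_def)
  qed
  then have "measure sphere_unif (UNIV - cap x \<gamma>) > 0"
    by (intro sphere_measure_pos[OF _ r(1)]) auto
  moreover have "measure sphere_unif (UNIV - cap x \<gamma>) = 1 - theta_bar x \<gamma>"
    using prob_space.prob_compl[OF sphere_prob, of "cap x \<gamma>"] by (simp add: theta_bar_def)
  ultimately show "theta_bar x \<gamma> < 1" by simp
qed



definition fb :: "real \<Rightarrow> real \<Rightarrow> real" where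
  "fb a t = t powr (a - 1) * (1 - t) powr (a - 1)"

lemma fb_nonneg: "fb a t \<ge> 0" unfolding fb_def by simp

lemma fb_sym: "fb a (1 - t) = fb a t" unfolding fb_def by (simp add: mult.commute)

lemma fb_meas: "fb a \<in> borel_measurable (lebesgue_on S)"
proof -
  have "fb a \<in> borel_measurable borel" unfolding fb_def by measurable
  from measurable_compose[OF id_borel_measurable_lebesgue_on this] show ?thesis by (simp add: id_def)
qed

lemma fb_bound:
  assumes a: "a > 0" and t: "0 \<le> t" "t \<le> 1/2"
  shows "fb a t \<le> 2 * t powr (a - 1) + 1"
proof (cases "a \<ge> 1")
  case True
  have "t powr (a - 1) \<le> 1" using t True by (intro powr_le1) auto
  moreover have "(1 - t) powr (a - 1) \<le> 1" using t True by (intro powr_le1) auto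
  ultimately have "fb a t \<le> 1" unfolding fb_def by (simp add: mult_le_one)
  then show ?thesis using powr_ge_zero[of t "a - 1"] by linarith
next
  case False
  have "(1 - t) powr (a - 1) \<le> (1/2) powr (a - 1)" using t False by (intro powr_mono2') auto
  also have "\<dots> \<le> (1/2) powr (-1)" using a by (intro powr_mono') auto
  also have "\<dots> = 2" by (simp add: powr_minus_divide)
  finally have "(1 - t) powr (a - 1) \<le> 2" .
  then have "fb a t \<le> t powr (a - 1) * 2" unfolding fb_def by (intro mult_left_mono) auto
  then show ?thesis by simp
qed

lemma fb_int_half:
  assumes a: "a > 0"
  shows "fb a integrable_on {0..1/2}"
proof -
  have g: "(\<lambda>t. 2 * t powr (a - 1) + 1) integrable_on {0..1/2}"
    using integrable_on_powr_from_0[of "a - 1" "1/2"] a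
    by (intro integrable_add integrable_on_cmult_left) (auto intro: integrable_on_const)
  have "fb a absolutely_integrable_on {0..1/2}"
    by (rule measurable_bounded_by_integrable_imp_absolutely_integrable[OF fb_meas _ g])
       (use fb_bound[OF a] fb_nonneg in auto)
  then show ?thesis using set_lebesgue_integral_eq_integral(1) by blast
qed

lemma fb_reflect:
  assumes "(fb a has_integral I) {0..c}" "0 \<le> c"
  shows "(fb a has_integral I) {1 - c..1}"
proof -
  have "((\<lambda>x. fb a ((-1) *\<^sub>R x + 1)) has_integral (1 / (\<bar>-1\<bar> ^ DIM(real))) *\<^sub>R I)
      ((\<lambda>x. (1 / (-1)) *\<^sub>R x + -((1 / (-1)) *\<^sub>R 1)) ` cbox 0 c)"
    by (rule has_integral_affinity) (use assms in auto)
  moreover have "(\<lambda>x. (1 / (-1)) *\<^sub>R x + -((1 / (-1)) *\<^sub>R 1)) ` cbox 0 c = {1 - c..(1::real)}"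
  proof -
    have "(\<lambda>x::real. (1 / (-1)) *\<^sub>R x + -((1 / (-1)) *\<^sub>R 1)) = (\<lambda>x. 1 - x)" by auto
    moreover have "(\<lambda>x::real. 1 - x) ` {0..c} = {1 - c..1}"
      by (auto simp: image_iff intro!: bexI[where x="1 - _"])
    ultimately show ?thesis by simp
  qed
  moreover have "(\<lambda>x. fb a ((-1) *\<^sub>R x + 1)) = fb a"
    using fb_sym by (auto simp: fun_eq_iff)
  ultimately show ?thesis by simp
qed

lemma fb_int01:
  assumes a: "a > 0"
  shows "fb a integrable_on {0..1}"
proof -
  have h1: "fb a integrable_on {0..1/2}" by (rule fb_int_half[OF a])
  then have "fb a integrable_on {1/2..1}"
    using fb_reflect[of a _ "1/2"] unfolding integrable_on_def by force
  with h1 show ?thesis by (intro Henstock_Kurzweil_Integration.integrable_combine[where a=0 and c="1/2" and b=1]) auto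
qed

lemma fb_pos_sub:
  assumes a: "a > 0" and ab: "0 \<le> u" "u < v" "v \<le> 1"
  shows "integral {u..v} (fb a) > 0"
proof -
  define u' v' where "u' = u + (v - u)/3" and "v' = v - (v - u)/3"
  have uv1: "0 < u'" using ab unfolding u'_def v'_def by argo
  have uv2: "u' < v'" using ab unfolding u'_def v'_def by argo
  have uv3: "v' < 1" using ab unfolding u'_def v'_def by argo
  have uv4: "u \<le> u'" using ab unfolding u'_def v'_def by argo
  have uv5: "v' \<le> v" using ab unfolding u'_def v'_def by argo
  note uv = uv1 uv2 uv3 uv4 uv5
  have cont: "continuous_on {u'..v'} (fb a)"
    unfolding fb_def using uv by (intro continuous_intros) auto
  have "integral {u'..v'} (fb a) \<noteq> 0"
  proof
    assume "integral {u'..v'} (fb a) = 0"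
    then have "\<forall>x\<in>{u'..v'}. fb a x = 0"
      using integral_eq_0_iff[OF cont uv(2)] fb_nonneg by auto
    then have "fb a u' = 0" using uv by auto
    moreover have "fb a u' > 0" unfolding fb_def using uv by auto
    ultimately show False by simp
  qed
  moreover have "integral {u'..v'} (fb a) \<ge> 0"
    using cont fb_nonneg by (intro integral_nonneg integrable_continuous_interval) auto
  moreover have "integral {u'..v'} (fb a) \<le> integral {u..v} (fb a)"
  proof (rule integral_subset_le)
    show "{u'..v'} \<subseteq> {u..v}" using uv by auto
    show "fb a integrable_on {u'..v'}" using cont by (rule integrable_continuous_interval)
    show "fb a integrable_on {u..v}"
      by (rule integrable_on_subinterval[OF fb_int01[OF a]]) (use ab in auto)
  qed (auto simp: fb_nonneg)
  ultimately show ?thesis by simp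
qed

lemma beta_facts:
  assumes a: "a > 0" and t: "1/2 \<le> \<tau>" "\<tau> < 1"
  shows "0 < inc_beta \<tau> a a" "0 < beta_fn a a - inc_beta \<tau> a a"
    "beta_fn a a - inc_beta \<tau> a a \<le> inc_beta \<tau> a a"
proof -
  have ib: "inc_beta x a a = integral {0..x} (fb a)" for x
    unfolding inc_beta_def fb_def by simp
  have int: "fb a integrable_on {0..1}" by (rule fb_int01[OF a])
  have split: "integral {0..1} (fb a) = integral {0..\<tau>} (fb a) + integral {\<tau>..1} (fb a)"
    using Henstock_Kurzweil_Integration.integral_combine[where a=0 and c=\<tau> and b=1 and f="fb a"] int t by auto
  have bdiff: "beta_fn a a - inc_beta \<tau> a a = integral {\<tau>..1} (fb a)"
    unfolding beta_fn_def ib using split by simp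
  show "0 < inc_beta \<tau> a a" unfolding ib using t by (intro fb_pos_sub[OF a]) auto
  show "0 < beta_fn a a - inc_beta \<tau> a a" unfolding bdiff using t by (intro fb_pos_sub[OF a]) auto
  have i0: "fb a integrable_on {0..1 - \<tau>}"
    by (rule integrable_on_subinterval[OF int]) (use t in auto)
  then have "(fb a has_integral integral {0..1-\<tau>} (fb a)) {1 - (1 - \<tau>)..1}"
    by (intro fb_reflect) (use t in auto)
  then have "integral {\<tau>..1} (fb a) = integral {0..1-\<tau>} (fb a)" by (simp add: integral_unique)
  also have "\<dots> \<le> integral {0..\<tau>} (fb a)"
  proof (rule integral_subset_le)
    show "fb a integrable_on {0..\<tau>}"
      by (rule integrable_on_subinterval[OF int]) (use t in auto)
  qed (use t i0 fb_nonneg in auto)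
  finally show "beta_fn a a - inc_beta \<tau> a a \<le> inc_beta \<tau> a a" using bdiff by (simp add: ib)
qed



lemma cand_prob: "prob_space (candidates N :: (nat \<Rightarrow> 'a::euclidean_space) measure)"
  unfolding candidates_def by (rule prob_space_PiM) (rule sphere_prob)

lemma ind_meas[measurable]:
  assumes "k < N"
  shows "(\<lambda>zs. indicator (cap x \<gamma>) (zs k) :: real) \<in> borel_measurable (candidates N :: (nat \<Rightarrow> 'a::euclidean_space) measure)"
proof -
  have "(\<lambda>zs. zs k) \<in> measurable (candidates N :: (nat \<Rightarrow> 'a) measure) sphere_unif"
    unfolding candidates_def using assms by (intro measurable_component_singleton) auto
  then have "(\<lambda>zs. zs k) \<in> measurable (candidates N :: (nat \<Rightarrow> 'a) measure) borel"
    by (simp add: measurable_cong_sets[OF refl sets_sphere])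
  then show ?thesis by measurable
qed

lemma cand_EJ:
  fixes x :: "'a::euclidean_space"
  assumes J: "J \<subseteq> {..<N}"
  shows "(\<integral>zs. (\<Prod>i\<in>J. indicator (cap x \<gamma>) (zs i)) \<partial>(candidates N :: (nat \<Rightarrow> 'a) measure)) = (theta_bar x \<gamma>) ^ card J"
proof -
  let ?P = "candidates N :: (nat \<Rightarrow> 'a) measure"
  let ?S = "prod_emb {..<N} (\<lambda>_. sphere_unif) J (Pi\<^sub>E J (\<lambda>_. cap x \<gamma>))"
  have fJ: "finite J" using J finite_subset by blast
  have eq: "(\<integral>zs. (\<Prod>i\<in>J. indicator (cap x \<gamma>) (zs i)) \<partial>?P) = (\<integral>zs. (indicator ?S zs :: real) \<partial>?P)"
    apply (rule Bochner_Integration.integral_cong[OF refl])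
    unfolding prod_emb_def candidates_def using J fJ
    by (auto simp: indicator_def space_PiM PiE_iff)
  have "?S \<subseteq> space ?P" unfolding candidates_def prod_emb_def by (auto simp: space_PiM)
  then have I: "(\<integral>zs. (\<Prod>i\<in>J. indicator (cap x \<gamma>) (zs i)) \<partial>?P) = measure ?P ?S"
    unfolding eq by (simp add: Int_absorb2)
  have "emeasure ?P ?S = (\<Prod>i\<in>J. emeasure sphere_unif (cap x \<gamma>))"
    unfolding candidates_def using J fJ by (intro emeasure_PiM_emb sphere_prob) auto
  moreover have e: "emeasure sphere_unif (cap x \<gamma>) = ennreal (theta_bar x \<gamma>)"
    unfolding theta_bar_def
    by (rule finite_measure.emeasure_eq_measure[OF prob_space.finite_measure[OF sphere_prob]])
  ultimately have "emeasure ?P ?S = ennreal (theta_bar x \<gamma> ^ card J)"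
    by (simp add: ennreal_power theta_bar_def)
  then have "measure ?P ?S = theta_bar x \<gamma> ^ card J"
    by (intro measure_eq_emeasure_eq_ennreal) (auto simp: theta_bar_def)
  with I show ?thesis by simp
qed

lemma cand_E1:
  fixes x :: "'a::euclidean_space"
  assumes "k < N"
  shows "(\<integral>zs. indicator (cap x \<gamma>) (zs k) \<partial>(candidates N :: (nat \<Rightarrow> 'a) measure)) = theta_bar x \<gamma>"
  using cand_EJ[of "{k}" N x \<gamma>] assms by simp

lemma cand_E2:
  fixes x :: "'a::euclidean_space"
  assumes "j < N" "k < N" "j \<noteq> k"
  shows "(\<integral>zs. indicator (cap x \<gamma>) (zs j) * indicator (cap x \<gamma>) (zs k) \<partial>(candidates N :: (nat \<Rightarrow> 'a) measure)) = (theta_bar x \<gamma>)^2"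
  using cand_EJ[of "{j,k}" N x \<gamma>] assms by (simp add: power2_eq_square)

lemma cand_AE:
  "AE zs in (candidates N :: (nat \<Rightarrow> 'a::euclidean_space) measure). \<forall>k<N. norm (zs k) = 1"
proof -
  have "AE zs in (candidates N :: (nat \<Rightarrow> 'a) measure). \<forall>k\<in>{..<N}. norm (zs k) = 1"
  proof (rule AE_finite_allI)
    fix k assume "k \<in> {..<N}"
    then show "AE zs in (candidates N :: (nat \<Rightarrow> 'a) measure). norm (zs k) = 1"
      unfolding candidates_def
      by (intro AE_PiM_component[where P="\<lambda>z. norm z = 1"] sphere_prob AE_sphere) auto
  qed simp
  then show ?thesis by eventually_elim auto
qed



lemma cand_var:
  fixes x :: "'a::euclidean_space"
  assumes N: "N > 0"
  shows "(\<integral>zs. ((\<Sum>k<N. indicator (cap x \<gamma>) (zs k)) / real N - theta_bar x \<gamma>)^2 \<partial>(candidates N :: (nat \<Rightarrow> 'a) measure))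
         = theta_bar x \<gamma> * (1 - theta_bar x \<gamma>) / real N"
proof -
  let ?P = "candidates N :: (nat \<Rightarrow> 'a) measure"
  interpret P: prob_space ?P by (rule cand_prob)
  define tb where "tb = theta_bar x \<gamma>"
  define I where "I = (\<lambda>(k::nat) (zs::nat \<Rightarrow> 'a). indicator (cap x \<gamma>) (zs k) :: real)"
  have Imeas: "I k \<in> borel_measurable ?P" if "k < N" for k
    unfolding I_def using that by measurable
  have I01: "I k zs = 0 \<or> I k zs = 1" for k zs unfolding I_def by (auto simp: indicator_def)
  have Iabs: "\<bar>I k zs\<bar> \<le> 1" for k zs unfolding I_def by (auto simp: indicator_def)
  have intjk: "integrable ?P (\<lambda>zs. (I j zs - tb) * (I k zs - tb))" if "j < N" "k < N" for j k
  proof (rule P.integrable_const_bound[where B="(1 + \<bar>tb\<bar>)^2"])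
    show "AE zs in ?P. norm ((I j zs - tb) * (I k zs - tb)) \<le> (1 + \<bar>tb\<bar>)^2"
    proof (rule AE_I2)
      fix zs
      have "\<bar>I j zs - tb\<bar> \<le> 1 + \<bar>tb\<bar>" "\<bar>I k zs - tb\<bar> \<le> 1 + \<bar>tb\<bar>" using I01[of j zs] I01[of k zs] by auto
      then show "norm ((I j zs - tb) * (I k zs - tb)) \<le> (1 + \<bar>tb\<bar>)^2"
        by (simp add: abs_mult power2_eq_square mult_mono)
    qed
    show "(\<lambda>zs. (I j zs - tb) * (I k zs - tb)) \<in> borel_measurable ?P"
      using Imeas[OF that(1)] Imeas[OF that(2)] by measurable
  qed
  have intI: "integrable ?P (I k)" if "k < N" for k
    by (rule P.integrable_const_bound[where B=1]) (use Iabs Imeas[OF that] in \<open>auto intro!: AE_I2\<close>)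
  have intII: "integrable ?P (\<lambda>zs. I j zs * I k zs)" if "j < N" "k < N" for j k
    by (rule P.integrable_const_bound[where B=1])
       (use Iabs Imeas[OF that(1)] Imeas[OF that(2)] in \<open>auto intro!: AE_I2 simp: abs_mult intro: mult_le_one\<close>)
  have E1: "(\<integral>zs. I k zs \<partial>?P) = tb" if "k < N" for k
    unfolding I_def tb_def using cand_E1[OF that, where x=x and \<gamma>=\<gamma>] by simp
  have Ejk: "(\<integral>zs. (I j zs - tb) * (I k zs - tb) \<partial>?P) = (if j = k then tb - tb^2 else 0)"
    if "j < N" "k < N" for j k
  proof -
    have eq: "(\<lambda>zs. (I j zs - tb) * (I k zs - tb)) = (\<lambda>zs. (I j zs * I k zs - tb * I j zs) - tb * I k zs + tb^2)"
      by (auto simp: fun_eq_iff algebra_simps power2_eq_square)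
    have "(\<integral>zs. (I j zs - tb) * (I k zs - tb) \<partial>?P) =
       (\<integral>zs. I j zs * I k zs \<partial>?P) - tb * (\<integral>zs. I j zs \<partial>?P) - tb * (\<integral>zs. I k zs \<partial>?P) + tb^2"
      unfolding eq using intII[OF that] intI[OF that(1)] intI[OF that(2)]
      by (simp add: Bochner_Integration.integral_diff Bochner_Integration.integral_add P.prob_space)
    moreover have "(\<integral>zs. I j zs * I k zs \<partial>?P) = (if j = k then tb else tb^2)"
    proof (cases "j = k")
      case True
      have "(\<lambda>zs. I j zs * I k zs) = I k" using True I01 by (auto simp: fun_eq_iff)
      then show ?thesis using True E1[OF that(2)] by simp
    next
      case False
      then show ?thesis unfolding I_def tb_def using cand_E2[OF that False, where x=x and \<gamma>=\<gamma>] by simp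
    qed
    ultimately show ?thesis using E1[OF that(1)] E1[OF that(2)] by (auto simp: power2_eq_square)
  qed
  have sq: "((\<Sum>k<N. I k zs) / real N - tb)^2 = (\<Sum>j<N. \<Sum>k<N. (I j zs - tb) * (I k zs - tb)) / (real N)^2" for zs
  proof -
    have "(\<Sum>k<N. I k zs) / real N - tb = (\<Sum>k<N. I k zs - tb) / real N"
      using N by (simp add: sum_subtractf field_simps)
    then show ?thesis
      by (simp add: power2_eq_square sum_product)
  qed
  have "(\<integral>zs. ((\<Sum>k<N. I k zs) / real N - tb)^2 \<partial>?P) =
      (\<integral>zs. (\<Sum>j<N. \<Sum>k<N. (I j zs - tb) * (I k zs - tb)) \<partial>?P) / (real N)^2"
    unfolding sq by simp
  also have "(\<integral>zs. (\<Sum>j<N. \<Sum>k<N. (I j zs - tb) * (I k zs - tb)) \<partial>?P) =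
      (\<Sum>j<N. \<Sum>k<N. (\<integral>zs. (I j zs - tb) * (I k zs - tb) \<partial>?P))"
  proof -
    have "(\<integral>zs. (\<Sum>j<N. \<Sum>k<N. (I j zs - tb) * (I k zs - tb)) \<partial>?P) =
      (\<Sum>j<N. (\<integral>zs. (\<Sum>k<N. (I j zs - tb) * (I k zs - tb)) \<partial>?P))"
      by (rule Bochner_Integration.integral_sum) (auto intro!: Bochner_Integration.integrable_sum intjk)
    also have "\<dots> = (\<Sum>j<N. \<Sum>k<N. (\<integral>zs. (I j zs - tb) * (I k zs - tb) \<partial>?P))"
      by (intro sum.cong refl Bochner_Integration.integral_sum) (auto intro!: intjk)
    finally show ?thesis .
  qed
  also have "\<dots> = (\<Sum>j<N. \<Sum>k<N. (if j = k then tb - tb^2 else 0))"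
    using Ejk by (intro sum.cong refl) auto
  also have "\<dots> = real N * (tb - tb^2)" by simp
  finally show ?thesis using N unfolding I_def tb_def by (simp add: power2_eq_square field_simps)
qed



definition VCf :: "real \<Rightarrow> real \<Rightarrow> real \<Rightarrow> real \<Rightarrow> real \<Rightarrow> real" where
  "VCf n tb c1 c2 \<theta> =
     (if \<theta> = tb then (1 / n) * (c1 / (\<theta> * c1 + (1 - \<theta>) * c2))
      else if \<theta> < tb then (1 / n) * (c1 / (tb * c1 + (1 - tb) * c2))
      else (1 - n * (1 - \<theta>) * ((1 / n) * (c2 / (tb * c1 + (1 - tb) * c2)))) / (n * \<theta>))"

definition VOf :: "real \<Rightarrow> real \<Rightarrow> real \<Rightarrow> real \<Rightarrow> real \<Rightarrow> real" where
  "VOf n tb c1 c2 \<theta> =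
     (if \<theta> = tb then (1 / n) * (c2 / (\<theta> * c1 + (1 - \<theta>) * c2))
      else if \<theta> < tb then (1 - n * \<theta> * ((1 / n) * (c1 / (tb * c1 + (1 - tb) * c2)))) / (n * (1 - \<theta>))
      else (1 / n) * (c2 / (tb * c1 + (1 - tb) * c2)))"

definition hf :: "real \<Rightarrow> real \<Rightarrow> real \<Rightarrow> real \<Rightarrow> real" where
  "hf tb c1 c2 \<theta> = (if \<theta> \<le> tb then \<theta> * c1 else 1 - (1 - \<theta>) * c2)"

lemma pi_form:
  "mmrc_pi N x \<gamma> p0 zs k =
    (if zs k \<in> cap x \<gamma> then VCf (real N) (theta_bar x \<gamma>) (pu_c1 x \<gamma> p0) (pu_c2 x \<gamma> p0) (mmrc_theta N x \<gamma> zs)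
     else VOf (real N) (theta_bar x \<gamma>) (pu_c1 x \<gamma> p0) (pu_c2 x \<gamma> p0) (mmrc_theta N x \<gamma> zs))"
  unfolding mmrc_pi_def Let_def VCf_def VOf_def by auto

lemma arith_cases:
  fixes n \<theta> tb c1 c2 p0 :: real
  assumes n: "n > 0" and th: "0 \<le> \<theta>" "\<theta> \<le> 1" and tb: "0 < tb" "tb < 1"
    and c1: "tb * c1 = p0" and c2: "(1 - tb) * c2 = 1 - p0" and p: "0 \<le> p0" "p0 \<le> 1"
    and c1p: "c1 \<ge> 0" and c2p: "c2 \<ge> 0"
  shows "n * \<theta> * VCf n tb c1 c2 \<theta> = hf tb c1 c2 \<theta>"
    "n * \<theta> * VCf n tb c1 c2 \<theta> + n * (1 - \<theta>) * VOf n tb c1 c2 \<theta> = 1"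
    "VCf n tb c1 c2 \<theta> \<ge> 0" "VOf n tb c1 c2 \<theta> \<ge> 0"
proof -
  have D: "tb * c1 + (1 - tb) * c2 = 1" using c1 c2 by simp
  consider (eq) "\<theta> = tb" | (lt) "\<theta> < tb" | (gt) "\<theta> > tb" by linarith
  then have "n * \<theta> * VCf n tb c1 c2 \<theta> = hf tb c1 c2 \<theta> \<and>
    n * \<theta> * VCf n tb c1 c2 \<theta> + n * (1 - \<theta>) * VOf n tb c1 c2 \<theta> = 1 \<and>
    VCf n tb c1 c2 \<theta> \<ge> 0 \<and> VOf n tb c1 c2 \<theta> \<ge> 0"
  proof cases
    case eq
    then show ?thesis using D n c1p c2p unfolding VCf_def VOf_def hf_def by auto
  next
    case lt
    have "\<theta> * c1 \<le> tb * c1" using lt c1p by (intro mult_right_mono) auto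
    then have a: "1 - \<theta> * c1 \<ge> 0" using c1 p by linarith
    have b: "1 - \<theta> > 0" using lt tb by simp
    show ?thesis using lt D n c1p c2p a b unfolding VCf_def VOf_def hf_def by (auto simp: field_simps)
  next
    case gt
    have "(1 - \<theta>) * c2 \<le> (1 - tb) * c2" using gt c2p by (intro mult_right_mono) auto
    then have a: "1 - (1 - \<theta>) * c2 \<ge> 0" using c2 p by linarith
    then have a': "n * (1 - (1 - \<theta>) * c2) \<ge> 0" using n by simp
    have b: "\<theta> > 0" using gt tb by simp
    show ?thesis using gt D n c1p c2p a a' b unfolding VCf_def VOf_def hf_def by (auto simp: field_simps)
  qed
  then show "n * \<theta> * VCf n tb c1 c2 \<theta> = hf tb c1 c2 \<theta>"
    "n * \<theta> * VCf n tb c1 c2 \<theta> + n * (1 - \<theta>) * VOf n tb c1 c2 \<theta> = 1"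
    "VCf n tb c1 c2 \<theta> \<ge> 0" "VOf n tb c1 c2 \<theta> \<ge> 0" by auto
qed

lemma card_cap_sum:
  fixes N :: nat and zs :: "nat \<Rightarrow> 'a"
  shows "real (card {k. k < N \<and> zs k \<in> S}) = (\<Sum>k<N. indicator S (zs k))"
proof (induction N)
  case 0
  then show ?case by simp
next
  case (Suc N)
  show ?case
  proof (cases "zs N \<in> S")
    case True
    then have "{k. k < Suc N \<and> zs k \<in> S} = insert N {k. k < N \<and> zs k \<in> S}" by auto
    then show ?thesis using Suc True by simp
  next
    case False
    then have "{k. k < Suc N \<and> zs k \<in> S} = {k. k < N \<and> zs k \<in> S}" using less_Suc_eq by auto
    then show ?thesis using Suc False by simp
  qed
qed

lemma mmrc_sums:
  fixes x :: "'a::euclidean_space"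
  assumes N: "N > 0" and tb: "0 < theta_bar x \<gamma>" "theta_bar x \<gamma> < 1"
    and p: "0 \<le> p0" "p0 \<le> 1"
  shows "(\<Sum>k<N. mmrc_pi N x \<gamma> p0 zs k * indicator (cap x \<gamma>) (zs k)) =
           hf (theta_bar x \<gamma>) (pu_c1 x \<gamma> p0) (pu_c2 x \<gamma> p0) (mmrc_theta N x \<gamma> zs)"
    "(\<Sum>k<N. mmrc_pi N x \<gamma> p0 zs k) = 1"
    "\<And>k. mmrc_pi N x \<gamma> p0 zs k \<ge> 0"
proof -
  define P where "P = (\<lambda>k. zs k \<in> cap x \<gamma>)"
  define A where "A = {k. k < N \<and> P k}"
  define B where "B = {k. k < N \<and> \<not> P k}"
  define VC where "VC = VCf (real N) (theta_bar x \<gamma>) (pu_c1 x \<gamma> p0) (pu_c2 x \<gamma> p0) (mmrc_theta N x \<gamma> zs)"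
  define VO where "VO = VOf (real N) (theta_bar x \<gamma>) (pu_c1 x \<gamma> p0) (pu_c2 x \<gamma> p0) (mmrc_theta N x \<gamma> zs)"
  have piF: "mmrc_pi N x \<gamma> p0 zs k = (if P k then VC else VO)" for k
    unfolding P_def VC_def VO_def by (rule pi_form)
  have cA: "card A + card B = N"
  proof -
    have "A \<union> B = {..<N}" "A \<inter> B = {}" unfolding A_def B_def by auto
    then show ?thesis using card_Un_disjoint[of A B] unfolding A_def B_def by auto
  qed
  have th: "mmrc_theta N x \<gamma> zs = real (card A) / real N" unfolding mmrc_theta_def A_def P_def by simp
  have cardA: "real (card A) = real N * mmrc_theta N x \<gamma> zs" using N th by simp
  have cardB: "real (card B) = real N * (1 - mmrc_theta N x \<gamma> zs)"
    using cA cardA by (simp add: algebra_simps)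
  have th01: "0 \<le> mmrc_theta N x \<gamma> zs" "mmrc_theta N x \<gamma> zs \<le> 1"
    using th cA N by (auto simp: divide_le_eq_1)
  have c1: "theta_bar x \<gamma> * pu_c1 x \<gamma> p0 = p0" using tb unfolding pu_c1_def by simp
  have c2: "(1 - theta_bar x \<gamma>) * pu_c2 x \<gamma> p0 = 1 - p0" using tb unfolding pu_c2_def by simp
  have c1p: "pu_c1 x \<gamma> p0 \<ge> 0" using tb p unfolding pu_c1_def by simp
  have c2p: "pu_c2 x \<gamma> p0 \<ge> 0" using tb p unfolding pu_c2_def by simp
  note AR = arith_cases[of "real N" "mmrc_theta N x \<gamma> zs" "theta_bar x \<gamma>" "pu_c1 x \<gamma> p0" p0 "pu_c2 x \<gamma> p0",
      OF _ th01 tb c1 c2 p c1p c2p, folded VC_def VO_def]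
  have "(\<Sum>k<N. mmrc_pi N x \<gamma> p0 zs k * indicator (cap x \<gamma>) (zs k)) = (\<Sum>k\<in>A. VC)"
    unfolding piF A_def P_def
    by (simp add: indicator_def sum.If_cases Int_def lessThan_def conj_commute)
  also have "\<dots> = real N * mmrc_theta N x \<gamma> zs * VC" using cardA by simp
  finally show "(\<Sum>k<N. mmrc_pi N x \<gamma> p0 zs k * indicator (cap x \<gamma>) (zs k)) =
           hf (theta_bar x \<gamma>) (pu_c1 x \<gamma> p0) (pu_c2 x \<gamma> p0) (mmrc_theta N x \<gamma> zs)"
    using AR(1) N by simp
  have "(\<Sum>k<N. mmrc_pi N x \<gamma> p0 zs k) = (\<Sum>k\<in>A. VC) + (\<Sum>k\<in>B. VO)"
    unfolding piF A_def B_def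
    by (simp add: sum.If_cases Int_def lessThan_def conj_commute)
  also have "\<dots> = real N * mmrc_theta N x \<gamma> zs * VC + real N * (1 - mmrc_theta N x \<gamma> zs) * VO"
    using cardA cardB by simp
  finally show "(\<Sum>k<N. mmrc_pi N x \<gamma> p0 zs k) = 1" using AR(2) N by simp
  show "\<And>k. mmrc_pi N x \<gamma> p0 zs k \<ge> 0" using AR(3,4) N unfolding piF by simp
qed



lemma m_affine:
  assumes d: "d \<ge> 2" and g: "0 \<le> \<gamma>" "\<gamma> < 1"
  shows "\<exists>K th. K > 0 \<and> th \<le> 1/2 \<and> (\<forall>p. m_fun d \<gamma> p = K * (p - th))"
proof -
  define a where "a = (real d - 1) / 2"
  define \<tau> where "\<tau> = (1 + \<gamma>) / 2"
  have a: "a > 0" using d by (simp add: a_def)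
  have t: "1/2 \<le> \<tau>" "\<tau> < 1" using g by (auto simp: \<tau>_def)
  define Bt where "Bt = inc_beta \<tau> a a"
  define Bd where "Bd = beta_fn a a - inc_beta \<tau> a a"
  have Bt: "Bt > 0" and Bd: "Bd > 0" and Bdt: "Bd \<le> Bt"
    using beta_facts[OF a t] by (auto simp: Bt_def Bd_def)
  define K0 where "K0 = (1 - \<gamma>\<^sup>2) powr a / (2 ^ (d - 2) * (real d - 1))"
  have "1 - \<gamma>\<^sup>2 > 0" using g proof -
    have "\<gamma> * \<gamma> \<le> \<gamma> * 1" using g by (intro mult_left_mono) auto
    then show ?thesis using g by (simp add: power2_eq_square)
  qed
  then have K0: "K0 > 0" using d unfolding K0_def by (intro divide_pos_pos) auto
  have m: "m_fun d \<gamma> p = K0 * (p / Bd - (1 - p) / Bt)" for p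
    unfolding m_fun_def Let_def K0_def Bd_def Bt_def a_def \<tau>_def by simp
  show ?thesis
  proof (intro exI conjI allI)
    show "K0 * (1 / Bd + 1 / Bt) > 0" using K0 Bd Bt by (intro mult_pos_pos add_pos_pos) auto
    show "Bd / (Bd + Bt) \<le> 1/2" using Bd Bt Bdt by (simp add: field_simps)
    fix p
    show "m_fun d \<gamma> p = K0 * (1 / Bd + 1 / Bt) * (p - Bd / (Bd + Bt))"
    proof -
      have e1: "1 / Bd + 1 / Bt = (Bd + Bt) / (Bd * Bt)" using Bd Bt by (simp add: field_simps)
      have e2: "p - Bd / (Bd + Bt) = (p * (Bd + Bt) - Bd) / (Bd + Bt)" using Bd Bt by (simp add: field_simps)
      have e3: "p / Bd - (1 - p) / Bt = (p * (Bd + Bt) - Bd) / (Bd * Bt)" using Bd Bt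
        by (simp add: field_simps)
      have "K0 * (1 / Bd + 1 / Bt) * (p - Bd / (Bd + Bt)) = K0 * ((p * (Bd + Bt) - Bd) / (Bd * Bt))"
        unfolding e1 e2 using Bd Bt by simp
      then show ?thesis unfolding m e3 by simp
    qed
  qed
qed



lemma theta_meas:
  fixes x :: "'a::euclidean_space"
  shows "mmrc_theta N x \<gamma> \<in> borel_measurable (candidates N :: (nat \<Rightarrow> 'a) measure)"
proof -
  have eq: "mmrc_theta N x \<gamma> = (\<lambda>zs. (\<Sum>k<N. indicator (cap x \<gamma>) (zs k)) / real N)"
    unfolding mmrc_theta_def by (simp add: fun_eq_iff card_cap_sum)
  have "(\<lambda>zs. (\<Sum>k<N. indicator (cap x \<gamma>) (zs k) :: real)) \<in> borel_measurable (candidates N :: (nat \<Rightarrow> 'a) measure)"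
    by (rule borel_measurable_sum) (auto intro: ind_meas)
  then show ?thesis unfolding eq by measurable
qed

lemma amgm: fixes u \<eta> :: real assumes "\<eta> > 0" shows "u \<le> u^2 / (2 * \<eta>) + \<eta> / 2"
proof -
  have "0 \<le> (u - \<eta>)^2" by simp
  then have "2 * \<eta> * u \<le> u^2 + \<eta>^2" by (simp add: power2_eq_square algebra_simps)
  then show ?thesis using assms by (simp add: field_simps power2_eq_square)
qed

theorem theorem6:
  fixes x :: "real ^ 'n" and \<gamma> p0 \<epsilon> lam :: real and N :: nat
  assumes "CARD('n) \<ge> 2"
    and "0 \<le> \<gamma>" and "\<gamma> < 1"
    and "p0 > 1/2" and "p0 \<le> 1"
    and "0 \<le> \<epsilon>"
    and "\<And>y :: real ^ 'n. norm y = 1 \<Longrightarrow>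
           pu_c1 y \<gamma> p0 \<le> exp \<epsilon> * pu_c2 y \<gamma> p0 \<and> pu_c2 y \<gamma> p0 \<le> exp \<epsilon> * pu_c1 y \<gamma> p0"
    and "lam > 0"
    and "real N \<ge> exp (2 * \<epsilon>) / 2 * (2 * (1 + lam) / (lam * (p0 - 1/2)))\<^sup>2
                    * ln (4 * (1 + lam) / (lam * (p0 - 1/2)))"
    and "norm x = 1"
  shows "E_mmrc N x \<gamma> p0 \<le> (1 + lam)\<^sup>2 * E_pu x \<gamma> p0
           + 2 * (1 + lam) * (2 + lam) * sqrt (E_pu x \<gamma> p0) + (2 + lam)\<^sup>2"
proof -
  note d = assms(1) and g0 = assms(2) and g1 = assms(3) and p0h = assms(4) and p01 = assms(5)
    and eps = assms(6) and ldp = assms(7) and lam = assms(8) and Nb = assms(9) and xn = assms(10)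
  let ?P = "candidates N :: (nat \<Rightarrow> real ^ 'n) measure"
  interpret P: prob_space ?P by (rule cand_prob)
  interpret S: prob_space "sphere_unif :: (real ^ 'n) measure" by (rule sphere_prob)
  define tb where "tb = theta_bar x \<gamma>"
  define c1 where "c1 = pu_c1 x \<gamma> p0"
  define c2 where "c2 = pu_c2 x \<gamma> p0"
  have tb: "0 < tb" "tb < 1" unfolding tb_def using theta_bar_bounds[OF xn g0 g1] by auto
  have c1e: "tb * c1 = p0" using tb unfolding c1_def pu_c1_def tb_def by simp
  have c2e: "(1 - tb) * c2 = 1 - p0" using tb unfolding c2_def pu_c2_def tb_def by simp
  have c1p: "c1 \<ge> 0" using tb p0h unfolding c1_def pu_c1_def tb_def by simp
  have c2p: "c2 \<ge> 0" using tb p01 unfolding c2_def pu_c2_def tb_def by simp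
  have D: "tb * c1 + (1 - tb) * c2 = 1" using c1e c2e by simp
  have ldpx: "c1 \<le> exp \<epsilon> * c2" using ldp[OF xn] unfolding c1_def c2_def by simp
  have c1eps: "c1 \<le> exp \<epsilon>"
  proof -
    have "c1 \<le> exp \<epsilon> * c1" using c1p eps by (simp add: mult_le_cancel_right1)
    then have "tb * c1 + (1 - tb) * c1 \<le> tb * (exp \<epsilon> * c1) + (1 - tb) * (exp \<epsilon> * c2)"
      using tb ldpx by (intro add_mono mult_left_mono) auto
    also have "\<dots> = exp \<epsilon> * (tb * c1 + (1 - tb) * c2)" by (simp add: algebra_simps)
    also have "\<dots> = exp \<epsilon>" using D by simp
    finally have "tb * c1 + (1 - tb) * c1 \<le> exp \<epsilon>" .
    moreover have "tb * c1 + (1 - tb) * c1 = c1" by (simp add: algebra_simps)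
    ultimately show ?thesis by simp
  qed
  define Q where "Q = (1 + lam) / (lam * (p0 - 1/2))"
  have Qpos: "Q > 0" using lam p0h by (simp add: Q_def)
  have Q2: "Q \<ge> 2"
  proof -
    have "lam * (p0 - 1/2) \<le> lam * (1/2)" using lam p01 by (intro mult_left_mono) auto
    then have "(1 + lam) / (lam * (p0 - 1/2)) \<ge> (1 + lam) / (lam * (1/2))"
      using lam p0h by (intro divide_left_mono) auto
    moreover have "(1 + lam) / (lam * (1/2)) \<ge> 2" using lam by (simp add: field_simps)
    ultimately show ?thesis unfolding Q_def by linarith
  qed
  have ln1: "ln (4 * Q) \<ge> 1"
  proof -
    have "exp 1 \<le> 4 * Q" using exp_le Q2 by linarith
    then have "ln (exp 1) \<le> ln (4 * Q)" by (intro ln_mono) auto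
    then show ?thesis by simp
  qed
  have NQ: "real N \<ge> 2 * exp (2 * \<epsilon>) * Q^2"
  proof -
    have "2 * (1 + lam) / (lam * (p0 - 1/2)) = 2 * Q" unfolding Q_def by simp
    moreover have "4 * (1 + lam) / (lam * (p0 - 1/2)) = 4 * Q" unfolding Q_def by simp
    ultimately have "real N \<ge> exp (2 * \<epsilon>) / 2 * (2 * Q)^2 * ln (4 * Q)" using Nb by simp
    moreover have "exp (2 * \<epsilon>) / 2 * (2 * Q)^2 * ln (4 * Q) \<ge> exp (2 * \<epsilon>) / 2 * (2 * Q)^2 * 1"
      using ln1 by (intro mult_left_mono) auto
    ultimately have "real N \<ge> exp (2 * \<epsilon>) / 2 * (2 * Q)^2" by linarith
    then show ?thesis by (simp add: power2_eq_square mult_ac)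
  qed
  have Npos: "N > 0"
  proof -
    have "2 * exp (2 * \<epsilon>) * Q^2 > 0" using Qpos by simp
    then have "real N > 0" using NQ by linarith
    then show ?thesis by simp
  qed
  define \<delta> where "\<delta> = 1 / Q"
  have dpos: "\<delta> > 0" using Qpos by (simp add: \<delta>_def)
  have \<delta>_eq: "\<delta> = lam * (p0 - 1/2) / (1 + lam)" unfolding \<delta>_def Q_def by simp
  define \<theta> where "\<theta> = mmrc_theta N x \<gamma>"
  have \<theta>eq: "\<theta> zs = (\<Sum>k<N. indicator (cap x \<gamma>) (zs k)) / real N" for zs
    unfolding \<theta>_def mmrc_theta_def by (simp add: card_cap_sum)
  define V where "V = (\<integral>zs. (\<theta> zs - tb)^2 \<partial>?P)"
  have Veq: "V = tb * (1 - tb) / real N" unfolding V_def \<theta>eq tb_def by (rule cand_var[OF Npos])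
  have Vle: "exp (2 * \<epsilon>) * V \<le> \<delta>^2"
  proof -
    have "tb * (1 - tb) \<le> 1/4"
    proof -
      have "0 \<le> (tb - 1/2)^2" by simp
      then show ?thesis by (simp add: power2_eq_square algebra_simps)
    qed
    then have "V \<le> (1/4) / real N" unfolding Veq using Npos by (intro divide_right_mono) auto
    then have "V \<le> 1 / (4 * real N)" by simp
    then have "exp (2 * \<epsilon>) * V \<le> exp (2 * \<epsilon>) * (1 / (4 * real N))" by (intro mult_left_mono) auto
    also have "\<dots> = exp (2 * \<epsilon>) / (4 * real N)" by simp
    also have "\<dots> \<le> \<delta>^2"
    proof -
      have e0: "exp (2 * \<epsilon>) * Q^2 \<ge> 0" by simp
      have "exp (2 * \<epsilon>) * Q^2 \<le> 4 * real N" using NQ e0 by linarith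
      moreover have "\<delta>^2 = 1 / Q^2" unfolding \<delta>_def by (simp add: power_divide)
      moreover have "4 * real N > 0" using Npos by simp
      moreover have "Q^2 > 0" using Qpos by simp
      ultimately show ?thesis by (simp add: pos_divide_le_eq pos_le_divide_eq mult.commute)
    qed
    finally show ?thesis .
  qed
  obtain K th where K: "K > 0" and th: "th \<le> 1/2" and mK: "\<And>p. m_fun CARD('n) \<gamma> p = K * (p - th)"
    using m_affine[OF d g0 g1] by blast
  have dimn: "DIM(real ^ 'n) = CARD('n)" by simp
  have th01: "0 \<le> \<theta> zs \<and> \<theta> zs \<le> 1" for zs
  proof -
    have "card {k. k < N \<and> zs k \<in> cap x \<gamma>} \<le> card {..<N}" by (intro card_mono) auto
    then show ?thesis unfolding \<theta>_def mmrc_theta_def using Npos by (simp add: divide_le_eq_1)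
  qed
  have hmeas: "hf tb c1 c2 \<in> borel_measurable borel" unfolding hf_def by measurable
  have \<theta>meas: "\<theta> \<in> borel_measurable ?P" unfolding \<theta>_def by (rule theta_meas)
  have pm_eq: "p_mmrc N x \<gamma> p0 = (\<integral>zs. hf tb c1 c2 (\<theta> zs) \<partial>?P)"
    unfolding p_mmrc_def
  proof (intro Bochner_Integration.integral_cong refl)
    fix zs
    have p00: "0 \<le> p0" using p0h by simp
    show "(\<Sum>k<N. mmrc_pi N x \<gamma> p0 zs k * indicator (cap x \<gamma>) (zs k)) = hf tb c1 c2 (\<theta> zs)"
      unfolding tb_def c1_def c2_def \<theta>_def
      by (rule mmrc_sums(1)[OF Npos tb[unfolded tb_def] p00 p01])
  qed
  have int_h: "integrable ?P (\<lambda>zs. hf tb c1 c2 (\<theta> zs))"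
  proof (rule P.integrable_const_bound[where B="1 + c1 + c2"])
    show "AE zs in ?P. norm (hf tb c1 c2 (\<theta> zs)) \<le> 1 + c1 + c2"
    proof (rule AE_I2)
      fix zs
      have t: "0 \<le> \<theta> zs" "\<theta> zs \<le> 1" using th01[of zs] by auto
      have "\<theta> zs * c1 \<le> c1" using t c1p by (simp add: mult_left_le_one_le)
      moreover have "(1 - \<theta> zs) * c2 \<le> c2" using t c2p by (simp add: mult_left_le_one_le)
      moreover have "0 \<le> (1 - \<theta> zs) * c2" "0 \<le> \<theta> zs * c1" using t c2p c1p by auto
      ultimately have "\<bar>\<theta> zs * c1\<bar> \<le> 1 + c1 + c2" "\<bar>1 - (1 - \<theta> zs) * c2\<bar> \<le> 1 + c1 + c2"
        using c1p c2p by arith+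
      then show "norm (hf tb c1 c2 (\<theta> zs)) \<le> 1 + c1 + c2"
        unfolding hf_def by simp
    qed
    show "(\<lambda>zs. hf tb c1 c2 (\<theta> zs)) \<in> borel_measurable ?P"
      using measurable_compose[OF \<theta>meas hmeas] by simp
  qed
  have int_v: "integrable ?P (\<lambda>zs. (\<theta> zs - tb)^2)"
  proof (rule P.integrable_const_bound[where B="1"])
    show "AE zs in ?P. norm ((\<theta> zs - tb)^2) \<le> 1"
    proof (rule AE_I2)
      fix zs
      have "\<bar>\<theta> zs - tb\<bar> \<le> 1" using th01[of zs] tb by auto
      then have "\<bar>\<theta> zs - tb\<bar>^2 \<le> 1^2" by (intro power_mono) auto
      then show "norm ((\<theta> zs - tb)^2) \<le> 1" by simp
    qed
    show "(\<lambda>zs. (\<theta> zs - tb)^2) \<in> borel_measurable ?P" using \<theta>meas by measurable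
  qed
  define \<eta> where "\<eta> = \<delta> / exp \<epsilon>"
  have eta: "\<eta> > 0" using dpos by (simp add: \<eta>_def)
  have pw: "p0 - c1 / (2 * \<eta>) * (\<theta> zs - tb)^2 - c1 * \<eta> / 2 \<le> hf tb c1 c2 (\<theta> zs)" for zs
  proof (cases "\<theta> zs \<le> tb")
    case True
    have "tb - \<theta> zs \<le> (tb - \<theta> zs)^2 / (2 * \<eta>) + \<eta> / 2" by (rule amgm[OF eta])
    then have "c1 * (tb - \<theta> zs) \<le> c1 * ((tb - \<theta> zs)^2 / (2 * \<eta>) + \<eta> / 2)"
      using c1p by (intro mult_left_mono) auto
    moreover have "(tb - \<theta> zs)^2 = (\<theta> zs - tb)^2" by (simp add: power2_commute)
    ultimately show ?thesis using True c1e unfolding hf_def by (simp add: algebra_simps)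
  next
    case False
    have "(1 - \<theta> zs) * c2 \<le> (1 - tb) * c2" using False c2p by (intro mult_right_mono) auto
    then have "hf tb c1 c2 (\<theta> zs) \<ge> p0" using False c2e unfolding hf_def by auto
    moreover have "c1 / (2 * \<eta>) * (\<theta> zs - tb)^2 \<ge> 0" "c1 * \<eta> / 2 \<ge> 0" using c1p eta by auto
    ultimately show ?thesis by linarith
  qed
  have "(\<integral>zs. p0 - c1 / (2 * \<eta>) * (\<theta> zs - tb)^2 - c1 * \<eta> / 2 \<partial>?P) \<le> (\<integral>zs. hf tb c1 c2 (\<theta> zs) \<partial>?P)"
    by (intro integral_mono int_h pw) (use int_v in auto)
  moreover have "(\<integral>zs. p0 - c1 / (2 * \<eta>) * (\<theta> zs - tb)^2 - c1 * \<eta> / 2 \<partial>?P) = p0 - c1 / (2 * \<eta>) * V - c1 * \<eta> / 2"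
    unfolding V_def using int_v by (simp add: Bochner_Integration.integral_diff P.prob_space)
  ultimately have pm1: "p_mmrc N x \<gamma> p0 \<ge> p0 - (c1 / (2 * \<eta>) * V + c1 * \<eta> / 2)" unfolding pm_eq by simp
  have V0: "V \<ge> 0" unfolding Veq using tb by simp
  have "c1 / (2 * \<eta>) * V + c1 * \<eta> / 2 \<le> exp \<epsilon> / (2 * \<eta>) * V + exp \<epsilon> * \<eta> / 2"
    using c1eps eta V0 by (intro add_mono mult_right_mono divide_right_mono) auto
  also have "exp \<epsilon> / (2 * \<eta>) * V = exp (2 * \<epsilon>) * V / (2 * \<delta>)"
    unfolding \<eta>_def using dpos by (simp add: exp_add[symmetric] field_simps mult_2)
  also have "exp \<epsilon> * \<eta> / 2 = \<delta> / 2" unfolding \<eta>_def by simp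
  also have "exp (2 * \<epsilon>) * V / (2 * \<delta>) \<le> \<delta>^2 / (2 * \<delta>)"
    using Vle dpos by (intro divide_right_mono) auto
  also have "\<delta>^2 / (2 * \<delta>) = \<delta> / 2" using dpos by (simp add: power2_eq_square)
  finally have pm: "p_mmrc N x \<gamma> p0 \<ge> p0 - \<delta>" using pm1 by simp
  define mp where "mp = m_fun CARD('n) \<gamma> p0"
  define mm where "mm = m_fun CARD('n) \<gamma> (p_mmrc N x \<gamma> p0)"
  have mp_pos: "mp > 0" unfolding mp_def mK using K th p0h by simp
  have mm_ge: "mm \<ge> mp / (1 + lam)"
  proof -
    have "\<delta> \<le> lam * (p0 - th) / (1 + lam)"
      unfolding \<delta>_eq using lam th by (intro divide_right_mono mult_left_mono) auto
    then have "(p0 - th) / (1 + lam) \<le> p0 - \<delta> - th" using lam by (simp add: field_simps)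
    also have "\<dots> \<le> p_mmrc N x \<gamma> p0 - th" using pm by simp
    finally have "K * ((p0 - th) / (1 + lam)) \<le> K * (p_mmrc N x \<gamma> p0 - th)"
      using K by (intro mult_left_mono) auto
    then show ?thesis unfolding mm_def mp_def mK by (simp only: times_divide_eq_right)
  qed
  have mm_pos: "mm > 0" using mm_ge mp_pos lam by (smt (verit) divide_pos_pos)
  have Emm: "E_mmrc N x \<gamma> p0 \<le> (1 / mm + 1)^2"
  proof -
    have "E_mmrc N x \<gamma> p0 = (\<integral>zs. (\<Sum>k<N. mmrc_pi N x \<gamma> p0 zs k *
          (norm ((1 / mm) *\<^sub>R zs k - x))\<^sup>2) \<partial>?P)"
      unfolding E_mmrc_def mm_def dimn ..
    also have "\<dots> \<le> (\<integral>zs. (1 / mm + 1)^2 \<partial>?P)"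
    proof (rule integral_mono_AE')
      show "integrable ?P (\<lambda>zs. (1 / mm + 1)^2)" by simp
      show "AE zs in ?P. 0 \<le> (1 / mm + 1)^2" by simp
      show "AE zs in ?P. (\<Sum>k<N. mmrc_pi N x \<gamma> p0 zs k * (norm ((1 / mm) *\<^sub>R zs k - x))\<^sup>2) \<le> (1 / mm + 1)^2"
        using cand_AE
      proof eventually_elim
        case (elim zs)
        have p00: "0 \<le> p0" using p0h by simp
        note S = mmrc_sums[OF Npos tb[unfolded tb_def] p00 p01, of zs]
        have "(\<Sum>k<N. mmrc_pi N x \<gamma> p0 zs k * (norm ((1 / mm) *\<^sub>R zs k - x))\<^sup>2)
            \<le> (\<Sum>k<N. mmrc_pi N x \<gamma> p0 zs k * (1 / mm + 1)^2)"
        proof (intro sum_mono mult_left_mono)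
          fix k assume k: "k \<in> {..<N}"
          have "norm ((1 / mm) *\<^sub>R zs k - x) \<le> norm ((1 / mm) *\<^sub>R zs k) + norm x"
            by (rule norm_triangle_ineq4)
          also have "\<dots> = 1 / mm + 1" using elim k xn mm_pos by simp
          finally show "(norm ((1 / mm) *\<^sub>R zs k - x))\<^sup>2 \<le> (1 / mm + 1)^2"
            by (intro power_mono) auto
          show "0 \<le> mmrc_pi N x \<gamma> p0 zs k" by (rule S(3))
        qed
        also have "\<dots> = (1 / mm + 1)^2" using S(2) by (simp add: sum_distrib_right[symmetric])
        finally show ?case .
      qed
    qed
    also have "\<dots> = (1 / mm + 1)^2" by (simp add: P.prob_space)
    finally show ?thesis .
  qed
  define E where "E = E_pu x \<gamma> p0"
  have dens: "pu_density x \<gamma> p0 z = c2 + (c1 - c2) * indicator (cap x \<gamma>) z" for z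
    unfolding pu_density_def c1_def c2_def by (simp add: indicator_def)
  have dens0: "pu_density x \<gamma> p0 z \<ge> 0" for z
    unfolding pu_density_def using c1p c2p unfolding c1_def c2_def by simp
  have dmeas: "pu_density x \<gamma> p0 \<in> borel_measurable (sphere_unif :: (real ^ 'n) measure)"
    unfolding dens[abs_def] by (simp add: measurable_cong_sets[OF sets_sphere refl])
  have densle: "pu_density x \<gamma> p0 z \<le> c1 + c2" for z
    unfolding pu_density_def c1_def[symmetric] c2_def[symmetric] using c1p c2p by auto
  have intd: "integrable sphere_unif (pu_density x \<gamma> p0 :: real ^ 'n \<Rightarrow> real)"
    by (rule S.integrable_const_bound[where B="c1 + c2"]) (use dmeas dens0 densle in auto)
  have int1: "(\<integral>z. pu_density x \<gamma> p0 z \<partial>(sphere_unif :: (real ^ 'n) measure)) = 1"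
  proof -
    have "(\<integral>z. pu_density x \<gamma> p0 z \<partial>(sphere_unif :: (real ^ 'n) measure)) = c2 + (c1 - c2) * tb"
    proof -
      have ii: "integrable sphere_unif (indicator (cap x \<gamma>) :: real ^ 'n \<Rightarrow> real)"
        by (rule S.integrable_const_bound[where B=1]) (auto simp: measurable_cong_sets[OF sets_sphere refl])
      have "(\<integral>z. c2 + (c1 - c2) * indicator (cap x \<gamma>) z \<partial>(sphere_unif :: (real ^ 'n) measure))
          = (\<integral>z. c2 \<partial>(sphere_unif :: (real ^ 'n) measure)) + (\<integral>z. (c1 - c2) * indicator (cap x \<gamma>) z \<partial>(sphere_unif :: (real ^ 'n) measure))"
        by (rule Bochner_Integration.integral_add) (use ii in auto)
      also have "\<dots> = c2 + (c1 - c2) * tb"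
        unfolding tb_def theta_bar_def using S.prob_space by simp
      finally show ?thesis unfolding dens .
    qed
    then show ?thesis using D by (simp add: algebra_simps)
  qed
  have E0: "E \<ge> 0" unfolding E_def E_pu_def
    by (intro Bochner_Integration.integral_nonneg mult_nonneg_nonneg dens0) simp
  have sE: "sqrt E \<ge> 1 / mp - 1"
  proof (cases "1 / mp - 1 \<ge> 0")
    case False
    then show ?thesis using E0 by (smt (verit) real_sqrt_ge_zero)
  next
    case True
    define r where "r = 1 / mp - 1"
    have r0: "r \<ge> 0" using True by (simp add: r_def)
    have intE: "integrable sphere_unif (\<lambda>z::real ^ 'n. pu_density x \<gamma> p0 z * (norm ((1 / mp) *\<^sub>R z - x))\<^sup>2)"
    proof (rule S.integrable_const_bound[where B="(c1 + c2) * (1 / mp + 1)^2"])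
      show "AE z in sphere_unif. norm (pu_density x \<gamma> p0 z * (norm ((1 / mp) *\<^sub>R z - x))\<^sup>2) \<le> (c1 + c2) * (1 / mp + 1)^2"
        using AE_sphere
      proof eventually_elim
        case (elim z)
        have "norm ((1 / mp) *\<^sub>R z - x) \<le> norm ((1 / mp) *\<^sub>R z) + norm x" by (rule norm_triangle_ineq4)
        also have "\<dots> = 1 / mp + 1" using elim xn mp_pos by simp
        finally have a: "(norm ((1 / mp) *\<^sub>R z - x))\<^sup>2 \<le> (1 / mp + 1)^2" by (intro power_mono) auto
        have b: "pu_density x \<gamma> p0 z \<le> c1 + c2"
          unfolding pu_density_def c1_def[symmetric] c2_def[symmetric] using c1p c2p by auto
        have "pu_density x \<gamma> p0 z * (norm ((1 / mp) *\<^sub>R z - x))\<^sup>2 \<le> (c1 + c2) * (1 / mp + 1)^2"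
          using a b dens0[of z] by (intro mult_mono) auto
        then show ?case using dens0[of z] by simp
      qed
      show "(\<lambda>z::real ^ 'n. pu_density x \<gamma> p0 z * (norm ((1 / mp) *\<^sub>R z - x))\<^sup>2) \<in> borel_measurable sphere_unif"
        using dmeas by (simp add: measurable_cong_sets[OF sets_sphere refl])
    qed
    have "(\<integral>z. pu_density x \<gamma> p0 z * r^2 \<partial>(sphere_unif :: (real ^ 'n) measure)) \<le> E"
      unfolding E_def E_pu_def mp_def[symmetric] dimn[symmetric]
    proof (rule integral_mono_AE)
      show "integrable sphere_unif (\<lambda>z::real ^ 'n. pu_density x \<gamma> p0 z * r^2)" using intd by simp
      show "integrable sphere_unif (\<lambda>z::real ^ 'n. pu_density x \<gamma> p0 z * (norm ((1 / m_fun DIM(real ^ 'n) \<gamma> p0) *\<^sub>R z - x))\<^sup>2)"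
        using intE unfolding mp_def dimn .
      show "AE z in sphere_unif. pu_density x \<gamma> p0 z * r^2 \<le> pu_density x \<gamma> p0 z * (norm ((1 / m_fun DIM(real ^ 'n) \<gamma> p0) *\<^sub>R z - x))\<^sup>2"
        using AE_sphere
      proof eventually_elim
        case (elim z)
        have "norm ((1 / mp) *\<^sub>R z) - norm x \<le> norm ((1 / mp) *\<^sub>R z - x)" by (rule norm_triangle_ineq2)
        then have "r \<le> norm ((1 / mp) *\<^sub>R z - x)" using elim xn mp_pos by (simp add: r_def)
        then have "r^2 \<le> (norm ((1 / mp) *\<^sub>R z - x))\<^sup>2" using r0 by (intro power_mono) auto
        then show ?case using dens0[of z] unfolding mp_def dimn by (intro mult_left_mono) auto
      qed
    qed
    moreover have "(\<integral>z. pu_density x \<gamma> p0 z * r^2 \<partial>(sphere_unif :: (real ^ 'n) measure)) = r^2"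
      using int1 by simp
    ultimately have "r^2 \<le> E" using int1 by simp
    then have "sqrt (r^2) \<le> sqrt E" by (rule real_sqrt_le_mono)
    then show ?thesis using r0 by (simp add: r_def)
  qed
  define s where "s = sqrt E"
  have s0: "s \<ge> 0" unfolding s_def using E0 by simp
  have sE2: "s^2 = E" unfolding s_def using E0 by simp
  have "1 / mm \<le> (1 + lam) / mp"
  proof -
    have "1 / mm \<le> 1 / (mp / (1 + lam))" using mm_ge mp_pos lam mm_pos by (intro divide_left_mono) (auto intro: mult_pos_pos)
    then show ?thesis by simp
  qed
  also have "(1 + lam) / mp = (1 + lam) * (1 / mp)" by simp
  also have "\<dots> \<le> (1 + lam) * (s + 1)" using sE lam unfolding s_def E_def by (intro mult_left_mono) auto
  finally have "1 / mm + 1 \<le> (1 + lam) * s + (2 + lam)" by (simp add: algebra_simps)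
  then have "(1 / mm + 1)^2 \<le> ((1 + lam) * s + (2 + lam))^2" using mm_pos by (intro power_mono) auto
  also have "\<dots> = (1 + lam)\<^sup>2 * E + 2 * (1 + lam) * (2 + lam) * s + (2 + lam)\<^sup>2"
    using sE2 by (simp add: power2_eq_square algebra_simps)
  finally show ?thesis using Emm unfolding s_def E_def by simp
qed

end
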